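(* Let $n\ge 1$ be an integer and let $p,q$ be integers with $1\le p<q$, and set $\nu=-n+\frac{p}{q}$ (so $\nu<0$ is a non-integer rational and $n=\lfloor|\nu-1|\rfloor$). Then for every complex $z$ with $0<|z|<1$, $$\mathrm{B}(\nu,0,z)=-\sum_{k=0}^{q-1}\exp\!\left(-\frac{2\pi i p k}{q}\right)\log\!\left(1-z^{1/q}\exp\!\left(\frac{2\pi i k}{q}\right)\right)+\sum_{k=1}^{n}\frac{z^{p/q-k}}{p/q-k}.$$
   Context: For $|z|<1$ (with $z\neq 0$ when $\operatorname{Re}\nu\le 0$) and $\nu\in\mathbb{C}\setminus\{0,-1,-2,\dots\}$, define $\mathrm{B}(\nu,0,z):=\sum_{k=0}^{\infty}\frac{z^{k+\nu}}{k+\nu}$, where $z^{k+\nu}:=z^{k}z^{\nu}$ and $z^{\nu}=\exp(\nu\operatorname{Log} z)$ uses the principal branch. All powers $z^{1/q}$, $z^{p/q-k}:=z^{p/q}z^{-k}$ and logarithms denote principal branches. *)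

theory Defs
  imports "HOL-Analysis.Analysis"
begin

text \<open>B(nu,0,z) = sum_k z^(k+nu)/(k+nu), with z^(k+nu) := z^k * z^nu and
  z^nu = exp(nu * Ln z) the principal power (complex powr).\<close>
definition incBeta0 :: "complex \<Rightarrow> complex \<Rightarrow> complex" where
  "incBeta0 \<nu> z = (\<Sum>k. z ^ k * z powr \<nu> / (of_nat k + \<nu>))"

end

theory Submission
  imports Defs
begin

lemma orth:
  fixes q :: nat and m :: int
  assumes "q > 0"
  shows "(\<Sum>k<q. exp (2 * of_real pi * \<i> * of_int m * of_nat k / of_nat q)) =
         (if int q dvd m then of_nat q else 0)"
proof -
  define a where "a = exp (2 * of_real pi * \<i> * of_int m / of_nat q)"
  have t: "exp (2 * of_real pi * \<i> * of_int m * of_nat k / of_nat q) = a ^ k" for k :: nat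
    unfolding a_def by (subst exp_of_nat_mult[symmetric]) (simp add: mult_ac)
  have aq: "a ^ q = 1"
  proof -
    have "a ^ q = exp (of_nat q * (2 * of_real pi * \<i> * of_int m / of_nat q))"
      unfolding a_def by (rule exp_of_nat_mult[symmetric])
    also have "\<dots> = exp (2 * of_real pi * \<i> * of_int m)" using assms by simp
    also have "\<dots> = 1" by (subst exp_eq_1) (auto intro!: exI[of _ m])
    finally show ?thesis .
  qed
  show ?thesis
  proof (cases "int q dvd m")
    case True
    then obtain t where m: "m = int q * t" by blast
    have "a = 1" unfolding a_def m using assms
      by (subst exp_eq_1) (auto intro!: exI[of _ t])
    then show ?thesis using True by (simp add: t)
  next
    case False
    have "a \<noteq> 1"
    proof
      assume "a = 1"
      then obtain r :: int where "2 * pi * of_int m / of_nat q = of_int (2 * r) * pi"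
        unfolding a_def by (subst (asm) exp_eq_1) auto
      hence "real_of_int m = of_nat q * of_int r" using assms by (simp add: field_simps)
      hence "m = int q * r" by (metis of_int_eq_iff of_int_mult of_int_of_nat_eq)
      with False show False by simp
    qed
    then show ?thesis using False by (simp add: t geometric_sum aq)
  qed
qed

theorem theorem2:
  fixes n p q :: nat and z :: complex
  assumes "n \<ge> 1" and "1 \<le> p" and "p < q"
    and "0 < norm z" and "norm z < 1"
  shows "incBeta0 (- of_nat n + of_nat p / of_nat q) z =
     - (\<Sum>k<q. exp (- 2 * of_real pi * \<i> * of_nat p * of_nat k / of_nat q) *
           Ln (1 - z powr (1 / of_nat q) * exp (2 * of_real pi * \<i> * of_nat k / of_nat q)))
     + (\<Sum>k=1..n. (z powr (of_nat p / of_nat q) * inverse (z ^ k)) /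
                   (of_nat p / of_nat q - of_nat k))"
proof -
  have z0: "z \<noteq> 0" using assms by auto
  have q0: "q > 0" using assms by auto
  define w where "w = z powr (1 / of_nat q)"
  define P where "P = z powr (of_nat p / of_nat q)"
  define E where "E k = exp (- 2 * of_real pi * \<i> * of_nat p * of_nat k / of_nat q)" for k :: nat
  define F where "F k = exp (2 * of_real pi * \<i> * of_nat k / of_nat q)" for k :: nat
  define A where "A = - (\<Sum>k<q. E k * Ln (1 - w * F k))"
  have we: "w = exp (1 / of_nat q * Ln z)" using z0 by (simp add: w_def powr_def)
  have wq: "w ^ q = z"
  proof -
    have "w ^ q = exp (of_nat q * (1 / of_nat q * Ln z))"
      unfolding we by (rule exp_of_nat_mult[symmetric])
    also have "\<dots> = z" using q0 z0 by simp
    finally show ?thesis .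
  qed
  have wp: "w ^ p = P"
  proof -
    have "w ^ p = exp (of_nat p * (1 / of_nat q * Ln z))"
      unfolding we by (rule exp_of_nat_mult[symmetric])
    also have "\<dots> = P" unfolding P_def powr_def using z0 by simp
    finally show ?thesis .
  qed
  have nw: "norm w < 1"
  proof -
    have "norm w = norm z powr (1 / real q)" unfolding w_def
      by (subst norm_powr_real_powr') auto
    also have "\<dots> < 1 powr (1 / real q)" using assms q0 by (intro powr_less_mono2) auto
    also have "\<dots> = 1" by simp
    finally show ?thesis .
  qed
  have nF: "norm (F k) = 1" for k unfolding F_def by (simp add: norm_exp_eq_Re)
  have ser: "(\<lambda>j. E k * ((w * F k) ^ j / of_nat j)) sums (- (E k * Ln (1 - w * F k)))" for k
  proof -
    have "norm (w * F k) < 1" using nw by (simp add: norm_mult nF)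
    hence "(\<lambda>j. (w * F k) ^ j / of_nat j) sums - Ln (1 - w * F k)"
      using sums_minus[OF Ln_series[of "- (w * F k)"]] by (simp add: power_minus')
    from sums_mult[OF this, of "E k"] show ?thesis by simp
  qed
  define f where "f j = (if int q dvd (int j - int p) then of_nat q * w ^ j / of_nat j else 0)" for j :: nat
  have fsum: "f sums A"
  proof -
    have "(\<lambda>j. \<Sum>k<q. E k * ((w * F k) ^ j / of_nat j)) sums (\<Sum>k<q. - (E k * Ln (1 - w * F k)))"
      by (intro sums_sum ser)
    moreover have "(\<Sum>k<q. E k * ((w * F k) ^ j / of_nat j)) = f j" for j
    proof -
      have eqk: "E k * F k ^ j = exp (2 * of_real pi * \<i> * of_int (int j - int p) * of_nat k / of_nat q)" for k
        unfolding E_def F_def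
        by (simp add: exp_of_nat_mult[symmetric] exp_add[symmetric] field_simps diff_divide_distrib)
      have S: "(\<Sum>k<q. E k * F k ^ j) = (if int q dvd (int j - int p) then of_nat q else 0)"
        unfolding eqk by (rule orth[OF q0])
      have "(\<Sum>k<q. E k * ((w * F k) ^ j / of_nat j)) = w ^ j / of_nat j * (\<Sum>k<q. E k * F k ^ j)"
        by (simp add: sum_distrib_left power_mult_distrib mult_ac)
      also have "\<dots> = f j"
        unfolding f_def S by simp
      finally show ?thesis .
    qed
    ultimately show ?thesis unfolding A_def by (simp add: sum_negf)
  qed
  have g: "(\<lambda>m. z ^ m * P / (of_nat m + of_nat p / of_nat q)) sums A"
  proof -
    have "strict_mono (\<lambda>m. q * m + p)" using q0 by (auto simp: strict_mono_def)
    moreover have "f j = 0" if "j \<notin> range (\<lambda>m. q * m + p)" for j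
    proof (rule ccontr)
      assume "f j \<noteq> 0"
      hence "int q dvd (int j - int p)" unfolding f_def by (auto split: if_splits)
      then obtain t where t: "int j - int p = int q * t" by blast
      have "t \<ge> 0"
      proof (rule ccontr)
        assume "\<not> t \<ge> 0"
        hence "int q * t \<le> - int q" proof -
          have "t \<le> -1" using \<open>\<not> t \<ge> 0\<close> by simp
          hence "int q * t \<le> int q * (-1)" by (intro mult_left_mono) auto
          thus ?thesis by simp
        qed
        thus False using t assms by linarith
      qed
      then have "j = q * nat t + p" using t by (smt (verit) int_nat_eq of_nat_add of_nat_eq_iff of_nat_mult)
      thus False using that by auto
    qed
    ultimately have "(\<lambda>m. f (q * m + p)) sums A \<longleftrightarrow> f sums A" by (rule sums_mono_reindex)
    with fsum have "(\<lambda>m. f (q * m + p)) sums A" by simp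
    moreover have "f (q * m + p) = z ^ m * P / (of_nat m + of_nat p / of_nat q)" for m
    proof -
      have "f (q * m + p) = of_nat q * w ^ (q * m + p) / of_nat (q * m + p)" unfolding f_def by simp
      also have "w ^ (q * m + p) = z ^ m * P" by (simp add: power_add power_mult wq wp)
      finally show ?thesis using q0 by (simp add: field_simps)
    qed
    ultimately show ?thesis by simp
  qed
  define \<nu> where "\<nu> = - of_nat n + (of_nat p / of_nat q :: complex)"
  define T where "T i = z ^ i * z powr \<nu> / (of_nat i + \<nu>)" for i :: nat
  have zn: "z powr \<nu> = inverse (z ^ n) * P" unfolding \<nu>_def P_def
    using z0 powr_nat'[of z n] by (simp only: powr_add powr_minus) simp
  have "(\<lambda>i. T (i + n)) sums A"
  proof -
    have "T (i + n) = z ^ i * P / (of_nat i + of_nat p / of_nat q)" for i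
    proof -
      have d: "of_nat (i + n) + \<nu> = of_nat i + of_nat p / of_nat q" unfolding \<nu>_def by simp
      show ?thesis unfolding T_def zn d using z0 by (simp add: power_add)
    qed
    thus ?thesis using g by simp
  qed
  hence "T sums (A + (\<Sum>i<n. T i))" by (simp add: sums_iff_shift)
  hence L: "incBeta0 \<nu> z = A + (\<Sum>i<n. T i)" unfolding incBeta0_def T_def by (simp add: sums_iff)
  have "(\<Sum>i<n. T i) = (\<Sum>k=1..n. P * inverse (z ^ k) / (of_nat p / of_nat q - of_nat k))"
  proof (rule sum.reindex_bij_witness[of _ "\<lambda>k. n - k" "\<lambda>i. n - i"])
    fix a assume a: "a \<in> {..<n}"
    define k where "k = n - a"
    have k: "1 \<le> k" "k \<le> n" "a = n - k" using a by (auto simp: k_def)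
    have "z ^ n = z ^ (n - k) * z ^ k" using k by (simp add: power_add[symmetric])
    moreover have "of_nat (n - k) + \<nu> = of_nat p / of_nat q - of_nat k" unfolding \<nu>_def
      using k by (simp add: of_nat_diff)
    ultimately show "P * inverse (z ^ (n - a)) / (of_nat p / of_nat q - of_nat (n - a)) = T a"
      unfolding T_def zn k_def[symmetric] using z0 \<open>a = n - k\<close> by simp
  qed auto
  with L show ?thesis unfolding \<nu>_def A_def E_def F_def w_def P_def by simp
qed

end
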